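(* Let $h:H\to K$ be an expanding isomorphism between torsion-free subgroups $K\subset H$ of a group $G$, and let $\mathcal F\subset\mathcal P_G$ be an $h$-invariant left-invariant ideal. Let $\alpha$ be a nonzero limit ordinal and $\{A_n\}_{n\in\omega}\subset\tau^{<\alpha}(\mathcal F)$ a family of subsets of $H$. Then $A=\bigcup_{n\in\omega}h^n(A_n)$ belongs to $\tau^\alpha(\mathcal F)$.
   Context: $h^1=h$, $h^{n+1}=h\circ h^n$ (and $h^0=\mathrm{id}_H$). $h$ is expanding if $\bigcap_{n\in\mathbb N}h^n(H)=\{e\}$. $\mathcal F$ is $h$-invariant if for every $A\subset H$: $A\in\mathcal F$ iff $h(A)\in\mathcal F$. An ideal is closed under subsets and finite unions; left-invariant: $xF\in\mathcal F$ for $F\in\mathcal F$, $x\in G$. $\tau(\mathcal F)=\{A\subset G: xA\cap yA\in\mathcal F$ for all distinct $x,y\in G\}$, $\tau^0(\mathcal F)=\mathcal F$, $\tau^{<\alpha}(\mathcal F)=\bigcup_{\beta<\alpha}\tau^\beta(\mathcal F)$, $\tau^\alpha(\mathcal F)=\tau(\tau^{<\alpha}(\mathcal F))$ for $\alpha>0$. *)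

theory Defs
  imports "HOL-Algebra.Coset"
begin

definition torsion_free_subgroup :: "('a, 'b) monoid_scheme \<Rightarrow> 'a set \<Rightarrow> bool" where
  "torsion_free_subgroup G H \<longleftrightarrow> subgroup H G \<and>
     (\<forall>x\<in>H. \<forall>n::nat. n > 0 \<longrightarrow> x [^]\<^bsub>G\<^esub> n = \<one>\<^bsub>G\<^esub> \<longrightarrow> x = \<one>\<^bsub>G\<^esub>)"

definition expanding :: "('a, 'b) monoid_scheme \<Rightarrow> 'a set \<Rightarrow> ('a \<Rightarrow> 'a) \<Rightarrow> bool" where
  "expanding G H h \<longleftrightarrow> (\<Inter>n. (h ^^ n) ` H) = {\<one>\<^bsub>G\<^esub>}"

definition h_invariant :: "'a set \<Rightarrow> ('a \<Rightarrow> 'a) \<Rightarrow> 'a set set \<Rightarrow> bool" where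
  "h_invariant H h \<F> \<longleftrightarrow> (\<forall>A. A \<subseteq> H \<longrightarrow> (A \<in> \<F> \<longleftrightarrow> h ` A \<in> \<F>))"

definition is_ideal :: "('a, 'b) monoid_scheme \<Rightarrow> 'a set set \<Rightarrow> bool" where
  "is_ideal G \<F> \<longleftrightarrow> \<F> \<subseteq> Pow (carrier G) \<and>
     (\<forall>A\<in>\<F>. \<forall>B. B \<subseteq> A \<longrightarrow> B \<in> \<F>) \<and>
     (\<forall>A\<in>\<F>. \<forall>B\<in>\<F>. A \<union> B \<in> \<F>)"

definition left_invariant :: "('a, 'b) monoid_scheme \<Rightarrow> 'a set set \<Rightarrow> bool" where
  "left_invariant G \<F> \<longleftrightarrow> (\<forall>F\<in>\<F>. \<forall>x\<in>carrier G. x <#\<^bsub>G\<^esub> F \<in> \<F>)"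

definition tau :: "('a, 'b) monoid_scheme \<Rightarrow> 'a set set \<Rightarrow> 'a set set" where
  "tau G \<F> = {A. A \<subseteq> carrier G \<and>
     (\<forall>x\<in>carrier G. \<forall>y\<in>carrier G. x \<noteq> y \<longrightarrow> (x <#\<^bsub>G\<^esub> A) \<inter> (y <#\<^bsub>G\<^esub> A) \<in> \<F>)}"

text \<open>Transfinite iterates tau^alpha, with ordinals represented by elements of an
  arbitrary well-ordered type 'o (the least element plays the role of 0).\<close>
definition tau_pow :: "('a, 'b) monoid_scheme \<Rightarrow> 'a set set \<Rightarrow> 'o::wellorder \<Rightarrow> 'a set set" where
  "tau_pow G \<F> = wfrec {(x, y). x < y}
     (\<lambda>r \<alpha>. if (\<exists>\<beta>. \<beta> < \<alpha>) then tau G (\<Union>\<beta>\<in>{\<beta>. \<beta> < \<alpha>}. r \<beta>) else \<F>)"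

definition tau_below :: "('a, 'b) monoid_scheme \<Rightarrow> 'a set set \<Rightarrow> 'o::wellorder \<Rightarrow> 'a set set" where
  "tau_below G \<F> \<alpha> = (\<Union>\<beta>\<in>{\<beta>. \<beta> < \<alpha>}. tau_pow G \<F> \<beta>)"

definition nonzero_limit :: "'o::wellorder \<Rightarrow> bool" where
  "nonzero_limit \<alpha> \<longleftrightarrow> (\<exists>\<beta>. \<beta> < \<alpha>) \<and> (\<forall>\<beta><\<alpha>. \<exists>\<gamma>. \<beta> < \<gamma> \<and> \<gamma> < \<alpha>)"

end

theory Submission
  imports Defs
begin

lemma tau_pow_unfold:
  "tau_pow G F (b::'o::wellorder) = (if (\<exists>c. c < b) then tau G (tau_below G F b) else F)"
proof -
  have wf: "wf {(x, y). x < (y::'o)}" using wf by (simp add: wf_def) 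
  show ?thesis unfolding tau_pow_def tau_below_def
    by (subst wfrec[OF wf]) (simp add: cut_def)
qed

context group begin

lemma lcos_mem: "z \<in> x <# S \<longleftrightarrow> (\<exists>s\<in>S. z = x \<otimes> s)"
  by (auto simp: l_coset_def)

lemma lcos_mono: "A \<subseteq> B \<Longrightarrow> x <# A \<subseteq> x <# B"
  by (auto simp: l_coset_def)

lemma lcos_empty[simp]: "x <# {} = {}"
  by (auto simp: l_coset_def)

lemma lcos_sub: "x \<in> carrier G \<Longrightarrow> A \<subseteq> carrier G \<Longrightarrow> x <# A \<subseteq> carrier G"
  by (auto simp: l_coset_def)

lemma lcos_assoc: "x \<in> carrier G \<Longrightarrow> y \<in> carrier G \<Longrightarrow> A \<subseteq> carrier G \<Longrightarrow> x <# (y <# A) = (x \<otimes> y) <# A"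
proof (rule Set.set_eqI)
  fix z assume xy: "x \<in> carrier G" "y \<in> carrier G" and A: "A \<subseteq> carrier G"
  show "z \<in> x <# (y <# A) \<longleftrightarrow> z \<in> (x \<otimes> y) <# A"
  proof
    assume "z \<in> x <# (y <# A)"
    then obtain s where s: "s \<in> y <# A" "z = x \<otimes> s" using lcos_mem by blast
    then obtain a where a: "a \<in> A" "s = y \<otimes> a" using lcos_mem by blast
    have "z = (x \<otimes> y) \<otimes> a" using s a xy A by (simp add: m_assoc subsetD)
    thus "z \<in> (x \<otimes> y) <# A" using a lcos_mem by blast
  next
    assume "z \<in> (x \<otimes> y) <# A"
    then obtain a where a: "a \<in> A" "z = (x \<otimes> y) \<otimes> a" using lcos_mem by blast
    have "y \<otimes> a \<in> y <# A" using a lcos_mem by blast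
    moreover have "z = x \<otimes> (y \<otimes> a)" using a xy A by (simp add: m_assoc subsetD)
    ultimately show "z \<in> x <# (y <# A)" using lcos_mem by blast
  qed
qed

lemma lcos_one: "A \<subseteq> carrier G \<Longrightarrow> \<one> <# A = A"
  by (auto simp: lcos_mem subsetD intro!: bexI)

lemma tauI: "S \<subseteq> carrier G \<Longrightarrow> (\<And>x y. x \<in> carrier G \<Longrightarrow> y \<in> carrier G \<Longrightarrow> x \<noteq> y \<Longrightarrow> (x <# S) \<inter> (y <# S) \<in> X) \<Longrightarrow> S \<in> tau G X"
  unfolding tau_def by simp

lemma tauD: "S \<in> tau G X \<Longrightarrow> x \<in> carrier G \<Longrightarrow> y \<in> carrier G \<Longrightarrow> x \<noteq> y \<Longrightarrow> (x <# S) \<inter> (y <# S) \<in> X"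
  unfolding tau_def by simp

lemma tau_sub: "S \<in> tau G X \<Longrightarrow> S \<subseteq> carrier G"
  unfolding tau_def by simp

lemma tau_down: assumes dc: "\<forall>F\<in>X. \<forall>B\<subseteq>F. B \<in> X" and A: "A \<in> tau G X" and BA: "B \<subseteq> A" shows "B \<in> tau G X"
proof (rule tauI)
  show "B \<subseteq> carrier G" using tau_sub[OF A] BA by blast
  fix x y assume xy: "x \<in> carrier G" "y \<in> carrier G" "x \<noteq> y"
  have "(x <# B) \<inter> (y <# B) \<subseteq> (x <# A) \<inter> (y <# A)" using lcos_mono[OF BA] by blast
  moreover have "(x <# A) \<inter> (y <# A) \<in> X" using tauD[OF A xy] .
  ultimately show "(x <# B) \<inter> (y <# B) \<in> X" using dc by blast
qed

lemma tau_linv: assumes A0: "A \<in> tau G X" and x: "x \<in> carrier G" shows "x <# A \<in> tau G X"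
proof (rule tauI)
  have A: "A \<subseteq> carrier G" using tau_sub[OF A0] .
  show "x <# A \<subseteq> carrier G" using lcos_sub[OF x A] .
  fix u v assume uv: "u \<in> carrier G" "v \<in> carrier G" "u \<noteq> v"
  have "u \<otimes> x \<noteq> v \<otimes> x" using uv x by auto
  hence "((u \<otimes> x) <# A) \<inter> ((v \<otimes> x) <# A) \<in> X" using tauD[OF A0] uv x by auto
  thus "(u <# (x <# A)) \<inter> (v <# (x <# A)) \<in> X" using lcos_assoc A uv x by simp
qed

lemma tau_via_H:
  assumes H: "subgroup H G" and SH: "S \<subseteq> H"
    and li: "\<forall>F\<in>X. \<forall>x\<in>carrier G. x <# F \<in> X" and dc: "\<forall>F\<in>X. \<forall>B\<subseteq>F. B \<in> X"
    and e: "{} \<in> X" and hyp: "\<forall>g\<in>H. g \<noteq> \<one> \<longrightarrow> S \<inter> (g <# S) \<in> X"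
  shows "S \<in> tau G X"
proof -
  have HC: "H \<subseteq> carrier G" using H subgroup.subset by blast
  have SC: "S \<subseteq> carrier G" using SH HC by blast
  have key: "(x <# S) \<inter> (y <# S) \<in> X" if xy: "x \<in> carrier G" "y \<in> carrier G" "x \<noteq> y" for x y
  proof -
    define g where "g = inv x \<otimes> y"
    have gC: "g \<in> carrier G" using xy g_def by simp
    have sub: "(x <# S) \<inter> (y <# S) \<subseteq> x <# (S \<inter> (g <# S))"
    proof
      fix z assume "z \<in> (x <# S) \<inter> (y <# S)"
      then obtain s s' where s: "s \<in> S" "s' \<in> S" "z = x \<otimes> s" "z = y \<otimes> s'" by (auto simp: lcos_mem)
      have sc: "s \<in> carrier G" "s' \<in> carrier G" using s SC by auto
      have "s = inv x \<otimes> (y \<otimes> s')" using sc xy s inv_solve_left by simp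
      also have "\<dots> = g \<otimes> s'" using s sc xy by (simp add: g_def m_assoc)
      finally have "s \<in> g <# S" using s by (auto simp: lcos_mem)
      hence "s \<in> S \<inter> (g <# S)" using s by blast
      thus "z \<in> x <# (S \<inter> (g <# S))" using s(3) lcos_mem by blast
    qed
    have "x <# (S \<inter> (g <# S)) \<in> X"
    proof (cases "g \<in> H")
      case True
      have "g \<noteq> \<one>"
      proof
        assume "g = \<one>"
        hence "y = x \<otimes> \<one>" using inv_solve_left'[of \<one> x y] xy g_def by simp
        thus False using xy by simp
      qed
      hence "S \<inter> (g <# S) \<in> X" using hyp True by blast
      thus ?thesis using li xy by blast
    next
      case False
      have "S \<inter> (g <# S) = {}"
      proof (rule ccontr)
        assume "S \<inter> (g <# S) \<noteq> {}"
        then obtain s where s0: "s \<in> S" "s \<in> g <# S" by blast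
        then obtain s' where s1: "s' \<in> S" "s = g \<otimes> s'" using lcos_mem by blast
        note s = s0(1) s1
        have sc: "s \<in> carrier G" "s' \<in> carrier G" using s SC by auto
        have "g = s \<otimes> inv s'" using s sc gC inv_solve_right[of g s s'] by blast
        hence "g \<in> H" using s SH H by (metis subgroup.m_closed subgroup.m_inv_closed subsetD) 
        thus False using False by blast
      qed
      thus ?thesis using e by simp
    qed
    thus "(x <# S) \<inter> (y <# S) \<in> X" using dc sub by blast
  qed
  show ?thesis using SC key by (rule tauI)
qed

end

definition cube :: "('a, 'b) monoid_scheme \<Rightarrow> 'a set \<Rightarrow> 'a set \<Rightarrow> 'a set" where
  "cube G S W = {z \<in> carrier G. \<forall>w\<in>W. inv\<^bsub>G\<^esub> w \<otimes>\<^bsub>G\<^esub> z \<in> S}"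

context group begin

lemma cube_one: "S \<subseteq> carrier G \<Longrightarrow> S \<subseteq> cube G S {\<one>}"
  unfolding cube_def by auto

lemma lcos_memI: assumes "w \<in> carrier G" "z \<in> carrier G" "inv w \<otimes> z \<in> C" shows "z \<in> w <# C"
proof -
  have "z = w \<otimes> (inv w \<otimes> z)" using assms by (simp add: m_assoc[symmetric])
  thus ?thesis using assms lcos_mem by blast
qed

lemma cube_lcos: assumes "z \<in> cube G S W" "w \<in> W" "W \<subseteq> carrier G" shows "z \<in> w <# S"
proof -
  have wc: "w \<in> carrier G" using assms by blast
  have z: "z \<in> carrier G" "inv w \<otimes> z \<in> S" using assms unfolding cube_def by auto
  have "z = w \<otimes> (inv w \<otimes> z)" using wc z by (simp add: m_assoc[symmetric])
  thus ?thesis using z lcos_mem by blast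
qed

lemma cube_step: assumes W: "W \<subseteq> carrier G" and g: "g \<in> carrier G"
  shows "cube G S W \<inter> (g <# cube G S W) \<subseteq> cube G S (W \<union> (g <# W))"
proof
  fix z assume z: "z \<in> cube G S W \<inter> (g <# cube G S W)"
  then obtain z' where z': "z' \<in> cube G S W" "z = g \<otimes> z'" using lcos_mem by blast
  have zc: "z' \<in> carrier G" using z' unfolding cube_def by auto
  have "inv w' \<otimes> z \<in> S" if w': "w' \<in> g <# W" for w'
  proof -
    obtain w where w: "w \<in> W" "w' = g \<otimes> w" using w' lcos_mem by blast
    have wc: "w \<in> carrier G" using w W by blast
    have "inv w' \<otimes> z = (inv w \<otimes> inv g) \<otimes> (g \<otimes> z')" using w z' wc g by (simp add: inv_mult_group)
    also have "\<dots> = inv w \<otimes> z'" using wc g zc by (simp add: m_assoc) (simp add: m_assoc[symmetric])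
    finally show ?thesis using z' w unfolding cube_def by auto
  qed
  thus "z \<in> cube G S (W \<union> (g <# W))" using z unfolding cube_def by auto
qed

lemma cube_H: assumes H: "subgroup H G" and "S \<subseteq> H" "W \<subseteq> H" "W \<noteq> {}" shows "cube G S W \<subseteq> H"
proof
  fix z assume z: "z \<in> cube G S W"
  obtain w where w: "w \<in> W" using assms by blast
  have wH: "w \<in> H" using w assms by blast
  have HC: "H \<subseteq> carrier G" using H subgroup.subset by blast
  have zc: "z \<in> carrier G" "inv w \<otimes> z \<in> S" using z w unfolding cube_def by auto
  have "z = w \<otimes> (inv w \<otimes> z)" using wH HC zc by (simp add: m_assoc[symmetric] subsetD)
  moreover have "w \<otimes> (inv w \<otimes> z) \<in> H" using wH zc assms subgroup.m_closed[OF H] by blast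
  ultimately show "z \<in> H" by simp
qed

lemma lcos_image: "x <# W = (\<lambda>w. x \<otimes> w) ` W"
  by (auto simp: l_coset_def)

lemma card_grow:
  assumes H: "subgroup H G" and tf: "\<forall>x\<in>H. \<forall>n::nat. n > 0 \<longrightarrow> x [^] n = \<one> \<longrightarrow> x = \<one>"
    and W: "finite W" "W \<subseteq> H" "W \<noteq> {}" and g: "g \<in> H" "g \<noteq> \<one>"
  shows "card W < card (W \<union> (g <# W))"
proof (rule ccontr)
  have HC: "H \<subseteq> carrier G" using H subgroup.subset by blast
  have gc: "g \<in> carrier G" using g HC by blast
  have fin: "finite (W \<union> (g <# W))" using W by (simp add: lcos_image)
  assume "\<not> card W < card (W \<union> (g <# W))"
  hence "card (W \<union> (g <# W)) \<le> card W" by simp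
  hence eq: "W \<union> (g <# W) = W" using card_seteq[OF fin] by blast
  obtain w where w: "w \<in> W" using W by blast
  have wc: "w \<in> carrier G" using w W HC by blast
  have mem: "g [^] n \<otimes> w \<in> W" for n :: nat
  proof (induction n)
    case 0 thus ?case using w wc by simp
  next
    case (Suc n)
    have "g \<otimes> (g [^] n \<otimes> w) \<in> g <# W" using Suc lcos_mem by blast
    hence "g \<otimes> (g [^] n \<otimes> w) \<in> W" using eq by blast
    moreover have "g \<otimes> (g [^] n \<otimes> w) = g [^] Suc n \<otimes> w"
      using gc wc by (subst nat_pow_Suc2[OF gc]) (simp add: m_assoc)
    ultimately show ?case by simp
  qed
  have "\<not> inj (\<lambda>n::nat. g [^] n \<otimes> w)"
  proof
    assume inj: "inj (\<lambda>n::nat. g [^] n \<otimes> w)"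
    have "range (\<lambda>n::nat. g [^] n \<otimes> w) \<subseteq> W" using mem by blast
    hence "finite (range (\<lambda>n::nat. g [^] n \<otimes> w))" using W finite_subset by blast
    thus False using finite_imageD[OF _ inj] by simp
  qed
  then obtain i j :: nat where ij: "i \<noteq> j" "g [^] i \<otimes> w = g [^] j \<otimes> w" unfolding inj_def by blast
  hence pe: "g [^] i = g [^] j" using gc wc by simp
  show False
  proof (cases "i < j")
    case True
    have "g [^] (j - i) = \<one>" using pow_eq_div2[OF gc pe[symmetric]] .
    thus False using tf g True by auto
  next
    case False
    have "g [^] (i - j) = \<one>" using pow_eq_div2[OF gc pe] .
    thus False using tf g False ij(1) by auto
  qed
qed

lemma card_lcos_le: "finite W \<Longrightarrow> card (g <# W) \<le> card W"
  by (simp add: lcos_image card_image_le)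

lemma pigeon:
  assumes z: "z \<in> cube G (\<Union>\<C>) W" and fin: "finite \<C>" "finite W" and lt: "card \<C> < card W"
    and W: "W \<subseteq> carrier G"
  shows "\<exists>w\<in>W. \<exists>w'\<in>W. w \<noteq> w' \<and> (\<exists>C\<in>\<C>. z \<in> (w <# C) \<inter> (w' <# C))"
proof -
  have "\<forall>w\<in>W. \<exists>C\<in>\<C>. inv w \<otimes> z \<in> C" using z unfolding cube_def by auto
  then obtain f where f: "\<forall>w\<in>W. f w \<in> \<C> \<and> inv w \<otimes> z \<in> f w" by metis
  have "\<not> inj_on f W"
  proof
    assume "inj_on f W"
    hence "card W \<le> card \<C>" using card_inj_on_le[of f W \<C>] f fin by blast
    thus False using lt by simp
  qed
  then obtain w w' where ww: "w \<in> W" "w' \<in> W" "w \<noteq> w'" "f w = f w'" unfolding inj_on_def by blast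
  have zc: "z \<in> carrier G" using z unfolding cube_def by auto
  have "z \<in> w <# f w" using lcos_memI ww f W zc by blast
  moreover have "z \<in> w' <# f w" using lcos_memI[of w' z "f w'"] ww f W zc by auto
  ultimately have "z \<in> (w <# f w) \<inter> (w' <# f w)" by blast
  thus ?thesis using ww f by blast
qed

end

locale tp0 = group +
  fixes F :: "'a set set"
  assumes ideal: "is_ideal G F" and linvF: "left_invariant G F"
begin

lemma F_sub: "A \<in> F \<Longrightarrow> A \<subseteq> carrier G" using ideal unfolding is_ideal_def by blast
lemma F_down: "A \<in> F \<Longrightarrow> B \<subseteq> A \<Longrightarrow> B \<in> F" using ideal unfolding is_ideal_def by blast
lemma F_un: "A \<in> F \<Longrightarrow> B \<in> F \<Longrightarrow> A \<union> B \<in> F" using ideal unfolding is_ideal_def by blast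
lemma F_linv: "A \<in> F \<Longrightarrow> x \<in> carrier G \<Longrightarrow> x <# A \<in> F" using linvF unfolding left_invariant_def by blast

lemma TB_iff: "A \<in> tau_below G F b \<longleftrightarrow> (\<exists>c<b. A \<in> tau_pow G F c)"
  unfolding tau_below_def by blast

lemma T_sub: "A \<in> tau_pow G F (b::'o::wellorder) \<Longrightarrow> A \<subseteq> carrier G"
  by (subst (asm) tau_pow_unfold) (auto split: if_splits dest: F_sub tau_sub)

lemma T_down: "A \<in> tau_pow G F (b::'o::wellorder) \<Longrightarrow> B \<subseteq> A \<Longrightarrow> B \<in> tau_pow G F b"
proof (induction b arbitrary: A B rule: less_induct)
  case (less b)
  show ?case
  proof (cases "\<exists>c. c < b")
    case True
    have dc: "\<forall>Z\<in>tau_below G F b. \<forall>B\<subseteq>Z. B \<in> tau_below G F b"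
      using less.IH unfolding tau_below_def by blast
    have "A \<in> tau G (tau_below G F b)" using less.prems(1) True by (subst (asm) tau_pow_unfold) simp
    hence "B \<in> tau G (tau_below G F b)" using tau_down[OF dc _ less.prems(2)] by blast
    thus ?thesis using True by (subst tau_pow_unfold) simp
  next
    case False
    thus ?thesis using less.prems F_down by (subst (asm) tau_pow_unfold, subst tau_pow_unfold) simp
  qed
qed

lemma T_linv: "A \<in> tau_pow G F (b::'o::wellorder) \<Longrightarrow> x \<in> carrier G \<Longrightarrow> x <# A \<in> tau_pow G F b"
  by (subst (asm) tau_pow_unfold, subst tau_pow_unfold) (auto split: if_splits intro: F_linv tau_linv)

lemma TB_sub_T: "tau_below G F (b::'o::wellorder) \<subseteq> tau_pow G F b"
proof
  fix A assume A: "A \<in> tau_below G F b"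
  then obtain c where c: "c < b" "A \<in> tau_pow G F c" unfolding TB_iff by blast
  have "A \<in> tau G (tau_below G F b)"
  proof (rule tauI)
    show "A \<subseteq> carrier G" using T_sub c by blast
    fix x y assume xy: "x \<in> carrier G" "y \<in> carrier G" "x \<noteq> y"
    have "x <# A \<in> tau_pow G F c" using T_linv c xy by blast
    hence "(x <# A) \<inter> (y <# A) \<in> tau_pow G F c" using T_down by blast
    thus "(x <# A) \<inter> (y <# A) \<in> tau_below G F b" using c unfolding TB_iff by blast
  qed
  thus "A \<in> tau_pow G F b" using c by (subst tau_pow_unfold) auto
qed

lemma T_mono: "(b::'o::wellorder) \<le> c \<Longrightarrow> tau_pow G F b \<subseteq> tau_pow G F c"
proof (cases "b = c")
  case False
  assume "b \<le> c" hence "b < c" using False by simp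
  hence "tau_pow G F b \<subseteq> tau_below G F c" unfolding tau_below_def by blast
  thus ?thesis using TB_sub_T by blast
qed simp

lemma TB_down: "\<forall>A\<in>tau_below G F (b::'o::wellorder). \<forall>B\<subseteq>A. B \<in> tau_below G F b"
  unfolding tau_below_def using T_down by blast
lemma TB_linv: "\<forall>A\<in>tau_below G F (b::'o::wellorder). \<forall>x\<in>carrier G. x <# A \<in> tau_below G F b"
  unfolding tau_below_def using T_linv by blast
end

definition NL :: "'o::wellorder \<Rightarrow> 'o \<Rightarrow> bool" where
  "NL d g \<longleftrightarrow> (\<forall>l. nonzero_limit l \<and> d < l \<longrightarrow> g < l)"

definition sc :: "'o::wellorder \<Rightarrow> 'o" where
  "sc r = (LEAST g. r < g)"

lemma sc_gt: assumes "r < a" "nonzero_limit a" shows "r < sc r" "sc r < a"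
proof -
  obtain g where g: "r < g" "g < a" using assms unfolding nonzero_limit_def by blast
  show "r < sc r" unfolding sc_def using g(1) by (rule LeastI[of "\<lambda>x. r < x"])
  have "sc r \<le> g" unfolding sc_def using g(1) by (rule Least_le[of "\<lambda>x. r < x"])
  thus "sc r < a" using g by simp
qed

lemma NL_lt: "NL d r \<Longrightarrow> nonzero_limit a \<Longrightarrow> d < a \<Longrightarrow> r < a"
  unfolding NL_def by blast

lemma NL_sc: assumes "NL d r" "d < a" "nonzero_limit a" shows "NL d (sc r)"
  unfolding NL_def
proof (intro allI impI)
  fix l assume l: "nonzero_limit l \<and> d < l"
  have "r < l" using assms(1) l unfolding NL_def by blast
  thus "sc r < l" using sc_gt l by blast
qed

context tp0 begin

lemma empty_F:
  assumes nt: "x \<in> carrier G" "x \<noteq> \<one>"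
  shows "{} \<in> tau_pow G F (b::'o::wellorder) \<Longrightarrow> {} \<in> F"
proof (induction b rule: less_induct)
  case (less b)
  show ?case
  proof (cases "\<exists>c. c < b")
    case True
    have "{} \<in> tau G (tau_below G F b)" using less.prems True by (subst (asm) tau_pow_unfold) simp
    hence "(x <# {}) \<inter> (\<one> <# {}) \<in> tau_below G F b" using nt by (intro tauD) auto
    then obtain c where "c < b" "{} \<in> tau_pow G F c" unfolding TB_iff by auto
    thus ?thesis using less.IH by blast
  next
    case False
    thus ?thesis using less.prems by (subst (asm) tau_pow_unfold) simp
  qed
qed

end

locale tp = tp0 +
  assumes empF: "{} \<in> F"
begin

lemma T_empty: "{} \<in> tau_pow G F (b::'o::wellorder)"
proof (induction b rule: less_induct)
  case (less b)
  show ?case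
  proof (cases "\<exists>c. c < b")
    case True
    then obtain c where c: "c < b" by blast
    have "{} \<in> tau_below G F b" using less.IH[OF c] c unfolding TB_iff by blast
    hence "{} \<in> tau G (tau_below G F b)" by (intro tauI) auto
    thus ?thesis using True by (subst tau_pow_unfold) simp
  next
    case False
    thus ?thesis using empF by (subst tau_pow_unfold) simp
  qed
qed

lemma TB_empty: "c < b \<Longrightarrow> {} \<in> tau_below G F (b::'o::wellorder)"
  unfolding TB_iff using T_empty by blast


lemma F_Union: "finite \<C> \<Longrightarrow> \<C> \<subseteq> F \<Longrightarrow> \<Union>\<C> \<in> F"
  by (induction rule: finite_induct) (auto simp: empF F_un)

lemma T_sc: assumes "r < a" "nonzero_limit (a::'o::wellorder)"
  shows "tau_pow G F (sc r) = tau G (tau_below G F (sc r))" "tau_pow G F r \<subseteq> tau_below G F (sc r)"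
proof -
  have "r < sc r" using sc_gt assms by blast
  thus "tau_pow G F (sc r) = tau G (tau_below G F (sc r))" by (subst tau_pow_unfold) auto
  show "tau_pow G F r \<subseteq> tau_below G F (sc r)" using \<open>r < sc r\<close> unfolding tau_below_def by blast
qed

lemma fin_max: "finite D \<Longrightarrow> D \<subseteq> tau_below G F (d::'o::wellorder) \<Longrightarrow> c0 < d \<Longrightarrow> \<exists>c<d. D \<subseteq> tau_pow G F c"
proof (induction rule: finite_induct)
  case empty thus ?case by blast
next
  case (insert x D)
  have "D \<subseteq> tau_below G F d" "x \<in> tau_below G F d" using insert.prems by auto
  then obtain c where c: "c < d" "D \<subseteq> tau_pow G F c" using insert.IH insert.prems(2) by blast
  obtain c' where c': "c' < d" "x \<in> tau_pow G F c'" using \<open>x \<in> tau_below G F d\<close> unfolding TB_iff by blast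
  have "D \<subseteq> tau_pow G F (max c c')" "x \<in> tau_pow G F (max c c')"
    using c c' T_mono[of c "max c c'"] T_mono[of c' "max c c'"] by auto
  moreover have "max c c' < d" using c c' by (simp add: max_def)
  ultimately show ?case by blast
qed

end

lemma (in group) lcos_H: assumes "subgroup H G" "w \<in> H" "C \<subseteq> H" shows "w <# C \<subseteq> H"
  using assms subgroup.m_closed[OF assms(1)] by (auto simp: lcos_mem subsetD)

locale tpU = tp +
  fixes H :: "'a set" and \<alpha> :: "'o::wellorder"
  assumes Hsub: "subgroup H G" and tf: "\<forall>x\<in>H. \<forall>n::nat. n > 0 \<longrightarrow> x [^] n = \<one> \<longrightarrow> x = \<one>"
    and lim: "nonzero_limit \<alpha>"
begin

lemma HC: "H \<subseteq> carrier G" using Hsub subgroup.subset by blast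

lemma ULem:
  "d < \<alpha> \<Longrightarrow> \<exists>g. NL d g \<and> (\<forall>\<C>. finite \<C> \<and> card \<C> \<le> m \<and> \<C> \<subseteq> tau_pow G F d \<and> (\<forall>C\<in>\<C>. C \<subseteq> H)
      \<longrightarrow> \<Union>\<C> \<in> tau_pow G F g)"
proof (induction d arbitrary: m rule: less_induct)
  case (less d)
  show ?case
  proof (cases "\<exists>c. c < d")
    case False
    have "NL d d" by (simp add: NL_def)
    moreover have "\<Union>\<C> \<in> tau_pow G F d" if "finite \<C> \<and> card \<C> \<le> m \<and> \<C> \<subseteq> tau_pow G F d \<and> (\<forall>C\<in>\<C>. C \<subseteq> H)" for \<C>
    proof -
      have "\<C> \<subseteq> F" using that False by (subst (asm) tau_pow_unfold) simp
      hence "\<Union>\<C> \<in> F" using F_Union that by blast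
      thus ?thesis using False by (subst tau_pow_unfold) simp
    qed
    ultimately show ?thesis by blast
  next
    case True
    define M where "M = (2^m) * (2^m) * m"
    have "\<exists>r. NL d r \<and> (\<forall>\<D>. finite \<D> \<and> card \<D> \<le> M \<and> \<D> \<subseteq> tau_below G F d \<and> (\<forall>D\<in>\<D>. D \<subseteq> H)
       \<longrightarrow> \<Union>\<D> \<in> tau_pow G F r)"
    proof (cases "nonzero_limit d")
      case lim_d: True
      show ?thesis
      proof (intro exI conjI allI impI)
        show "NL d d" by (simp add: NL_def)
        fix \<D> assume D: "finite \<D> \<and> card \<D> \<le> M \<and> \<D> \<subseteq> tau_below G F d \<and> (\<forall>D\<in>\<D>. D \<subseteq> H)"
        obtain c0 where c0: "c0 < d" using True by blast
        have D1: "finite \<D>" "\<D> \<subseteq> tau_below G F d" using D by auto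
        obtain c where c: "c < d" "\<D> \<subseteq> tau_pow G F c" using fin_max[OF D1 c0] by blast
        have "c < \<alpha>" using c less.prems by simp
        then obtain g where g: "NL c g" "\<forall>\<C>. finite \<C> \<and> card \<C> \<le> M \<and> \<C> \<subseteq> tau_pow G F c \<and> (\<forall>C\<in>\<C>. C \<subseteq> H)
            \<longrightarrow> \<Union>\<C> \<in> tau_pow G F g" using less.IH[OF c(1)] by blast
        have "g < d" using g(1) lim_d c(1) unfolding NL_def by blast
        have "\<Union>\<D> \<in> tau_pow G F g" using g(2) D c by blast
        thus "\<Union>\<D> \<in> tau_pow G F d" using T_mono[of g d] \<open>g < d\<close> by (meson less_imp_le subsetD)
      qed
    next
      case nl: False
      then obtain c where c: "c < d" "\<forall>e. c < e \<longrightarrow> \<not> e < d"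
        using True unfolding nonzero_limit_def by blast
      have TBsub: "tau_below G F d \<subseteq> tau_pow G F c"
      proof
        fix A assume "A \<in> tau_below G F d"
        then obtain e where e: "e < d" "A \<in> tau_pow G F e" unfolding TB_iff by blast
        have "e \<le> c" using c e(1) by (meson not_le)
        thus "A \<in> tau_pow G F c" using e T_mono by blast
      qed
      have "c < \<alpha>" using c less.prems by simp
      then obtain g where g: "NL c g" "\<forall>\<C>. finite \<C> \<and> card \<C> \<le> M \<and> \<C> \<subseteq> tau_pow G F c \<and> (\<forall>C\<in>\<C>. C \<subseteq> H)
            \<longrightarrow> \<Union>\<C> \<in> tau_pow G F g" using less.IH[OF c(1)] by blast
      show ?thesis
      proof (intro exI conjI allI impI)
        show "NL d g" using g(1) c(1) unfolding NL_def by auto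
        fix \<D> assume D: "finite \<D> \<and> card \<D> \<le> M \<and> \<D> \<subseteq> tau_below G F d \<and> (\<forall>D\<in>\<D>. D \<subseteq> H)"
        hence "finite \<D> \<and> card \<D> \<le> M \<and> \<D> \<subseteq> tau_pow G F c \<and> (\<forall>D\<in>\<D>. D \<subseteq> H)" using TBsub by blast
        thus "\<Union>\<D> \<in> tau_pow G F g" using g(2) by blast
      qed
    qed
    then obtain r where r: "NL d r" "\<forall>\<D>. finite \<D> \<and> card \<D> \<le> M \<and> \<D> \<subseteq> tau_below G F d \<and> (\<forall>D\<in>\<D>. D \<subseteq> H)
       \<longrightarrow> \<Union>\<D> \<in> tau_pow G F r" by blast
    have NLk: "NL d ((sc ^^ k) r)" for k
      by (induction k) (auto simp: r(1) intro: NL_sc[OF _ less.prems lim])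
    have Td: "tau_pow G F d = tau G (tau_below G F d)" using True by (subst tau_pow_unfold) simp
    show ?thesis
    proof (intro exI conjI allI impI)
      show "NL d ((sc ^^ m) r)" by (rule NLk)
      fix \<C> assume C: "finite \<C> \<and> card \<C> \<le> m \<and> \<C> \<subseteq> tau_pow G F d \<and> (\<forall>C\<in>\<C>. C \<subseteq> H)"
      have SH: "\<Union>\<C> \<subseteq> H" using C by blast
      have claim: "\<forall>W. finite W \<and> W \<subseteq> H \<and> W \<noteq> {} \<and> m < card W + k \<and> card W * 2^k \<le> 2^m
          \<longrightarrow> cube G (\<Union>\<C>) W \<in> tau_pow G F ((sc ^^ k) r)" for k
      proof (induction k)
        case 0
        show ?case
        proof (intro allI impI)
          fix W assume W: "finite W \<and> W \<subseteq> H \<and> W \<noteq> {} \<and> m < card W + 0 \<and> card W * 2^0 \<le> 2^m"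
          have WC: "W \<subseteq> carrier G" using W HC by blast
          define I where "I = {(w, w', C). w \<in> W \<and> w' \<in> W \<and> w \<noteq> w' \<and> C \<in> \<C>}"
          define cells where "cells = (\<lambda>(w, w', C). (w <# C) \<inter> (w' <# C)) ` I"
          have IW: "I \<subseteq> W \<times> W \<times> \<C>" unfolding I_def by auto
          have finI: "finite I" using IW W C finite_subset by blast
          have "cube G (\<Union>\<C>) W \<subseteq> \<Union>cells"
          proof
            fix z assume z: "z \<in> cube G (\<Union>\<C>) W"
            have "card \<C> < card W" using C W by simp
            then obtain w w' C0 where ww: "w \<in> W" "w' \<in> W" "w \<noteq> w'" "C0 \<in> \<C>" "z \<in> (w <# C0) \<inter> (w' <# C0)"
              using pigeon[OF z] C W WC by blast
            hence "(w, w', C0) \<in> I" unfolding I_def by blast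
            hence "(w <# C0) \<inter> (w' <# C0) \<in> cells" unfolding cells_def by force
            thus "z \<in> \<Union>cells" using ww by blast
          qed
          moreover have "\<Union>cells \<in> tau_pow G F r"
          proof -
            have "finite cells" unfolding cells_def using finI by simp
            moreover have "card cells \<le> M"
            proof -
              have "card cells \<le> card I" unfolding cells_def using finI card_image_le by blast
              also have "\<dots> \<le> card (W \<times> W \<times> \<C>)" using IW W C by (intro card_mono) auto
              also have "\<dots> = card W * card W * card \<C>" by (simp add: card_cartesian_product)
              also have "\<dots> \<le> (2^m) * (2^m) * m" using W C by (intro mult_mono) auto
              finally show ?thesis unfolding M_def .
            qed
            moreover have "cells \<subseteq> tau_below G F d"
            proof
              fix X assume "X \<in> cells"
              then obtain w w' C0 where "(w, w', C0) \<in> I" "X = (w <# C0) \<inter> (w' <# C0)" unfolding cells_def by auto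
              hence ww: "w \<in> carrier G" "w' \<in> carrier G" "w \<noteq> w'" "C0 \<in> tau G (tau_below G F d)"
                and X: "X = (w <# C0) \<inter> (w' <# C0)" using WC C Td unfolding I_def by auto
              show "X \<in> tau_below G F d" using tauD[OF ww(4) ww(1-3)] X by simp
            qed
            moreover have "\<forall>D\<in>cells. D \<subseteq> H"
            proof
              fix X assume "X \<in> cells"
              then obtain w w' C0 where "(w, w', C0) \<in> I" "X = (w <# C0) \<inter> (w' <# C0)" unfolding cells_def by auto
              hence "w \<in> H" "C0 \<subseteq> H" "X \<subseteq> w <# C0" using W C unfolding I_def by auto
              thus "X \<subseteq> H" using lcos_H[OF Hsub] by blast
            qed
            ultimately show ?thesis using r(2) by blast
          qed
          ultimately show "cube G (\<Union>\<C>) W \<in> tau_pow G F ((sc ^^ 0) r)" using T_down by simp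
        qed
      next
        case (Suc k)
        define r' where "r' = (sc ^^ k) r"
        have r'a: "r' < \<alpha>" using NLk[of k] NL_lt[OF _ lim less.prems] unfolding r'_def by blast
        have Ts: "tau_pow G F (sc r') = tau G (tau_below G F (sc r'))" "tau_pow G F r' \<subseteq> tau_below G F (sc r')"
          using T_sc[OF r'a lim] by auto
        have r's: "r' < sc r'" using sc_gt[OF r'a lim] by blast
        show ?case
        proof (intro allI impI)
          fix W assume W: "finite W \<and> W \<subseteq> H \<and> W \<noteq> {} \<and> m < card W + Suc k \<and> card W * 2^Suc k \<le> 2^m"
          have WC: "W \<subseteq> carrier G" using W HC by blast
          have "cube G (\<Union>\<C>) W \<in> tau G (tau_below G F (sc r'))"
          proof (rule tau_via_H[OF Hsub])
            show "cube G (\<Union>\<C>) W \<subseteq> H" using cube_H[OF Hsub SH] W by blast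
            show "\<forall>Z\<in>tau_below G F (sc r'). \<forall>x\<in>carrier G. x <# Z \<in> tau_below G F (sc r')" by (rule TB_linv)
            show "\<forall>Z\<in>tau_below G F (sc r'). \<forall>B\<subseteq>Z. B \<in> tau_below G F (sc r')" by (rule TB_down)
            show "{} \<in> tau_below G F (sc r')" using TB_empty[OF r's] .
            show "\<forall>g\<in>H. g \<noteq> \<one> \<longrightarrow> cube G (\<Union>\<C>) W \<inter> (g <# cube G (\<Union>\<C>) W) \<in> tau_below G F (sc r')"
            proof (intro ballI impI)
              fix g assume g: "g \<in> H" "g \<noteq> \<one>"
              define W' where "W' = W \<union> (g <# W)"
              have gC: "g \<in> carrier G" using g HC by blast
              have sub: "cube G (\<Union>\<C>) W \<inter> (g <# cube G (\<Union>\<C>) W) \<subseteq> cube G (\<Union>\<C>) W'"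
                unfolding W'_def using cube_step[OF WC gC] .
              have gt: "card W < card W'" unfolding W'_def using card_grow[OF Hsub tf _ _ _ g] W by blast
              have le: "card W' \<le> 2 * card W"
              proof -
                have "card W' \<le> card W + card (g <# W)" unfolding W'_def by (rule card_Un_le)
                also have "card (g <# W) \<le> card W" using card_lcos_le W by blast
                finally show ?thesis by simp
              qed
              have "finite W' \<and> W' \<subseteq> H \<and> W' \<noteq> {} \<and> m < card W' + k \<and> card W' * 2^k \<le> 2^m"
              proof (intro conjI)
                show "finite W'" unfolding W'_def using W by (simp add: lcos_image)
                show "W' \<subseteq> H" unfolding W'_def using W lcos_H[OF Hsub g(1)] by blast
                show "W' \<noteq> {}" unfolding W'_def using W by blast
                show "m < card W' + k" using W gt by simp
                have "card W' * 2^k \<le> 2 * card W * 2^k" using le by simp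
                also have "\<dots> = card W * 2^Suc k" by simp
                finally show "card W' * 2^k \<le> 2^m" using W by linarith
              qed
              hence "cube G (\<Union>\<C>) W' \<in> tau_pow G F r'" using Suc.IH unfolding r'_def by blast
              hence "cube G (\<Union>\<C>) W' \<in> tau_below G F (sc r')" using Ts by blast
              thus "cube G (\<Union>\<C>) W \<inter> (g <# cube G (\<Union>\<C>) W) \<in> tau_below G F (sc r')"
                using TB_down sub by blast
            qed
          qed
          thus "cube G (\<Union>\<C>) W \<in> tau_pow G F ((sc ^^ Suc k) r)" using Ts unfolding r'_def by simp
        qed
      qed
      have "cube G (\<Union>\<C>) {\<one>} \<in> tau_pow G F ((sc ^^ m) r)" using claim[of m] Hsub subgroup.one_closed by force
      moreover have "\<Union>\<C> \<subseteq> cube G (\<Union>\<C>) {\<one>}" using cube_one SH HC by blast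
      ultimately show "\<Union>\<C> \<in> tau_pow G F ((sc ^^ m) r)" using T_down by blast
    qed
  qed
qed

end

locale tpM = tpU +
  fixes K :: "'a set" and h :: "'a \<Rightarrow> 'a"
  assumes Ksub: "subgroup K G" and KH: "K \<subseteq> H"
    and hK: "\<And>x. x \<in> H \<Longrightarrow> h x \<in> K"
    and hmul: "\<And>x y. x \<in> H \<Longrightarrow> y \<in> H \<Longrightarrow> h (x \<otimes> y) = h x \<otimes> h y"
    and hinj: "inj_on h H"
    and hinv: "h_invariant H h F"
    and expd: "(\<Inter>n. (h ^^ n) ` H) = {\<one>}"
begin

lemma KC: "K \<subseteq> carrier G" using Ksub subgroup.subset by blast

lemma h_one: "h \<one> = \<one>"
proof -
  have o: "\<one> \<in> H" using Hsub subgroup.one_closed by blast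
  have c: "h \<one> \<in> carrier G" using hK[OF o] KC by blast
  have "h \<one> \<otimes> h \<one> = h \<one>" using hmul[OF o o] by simp
  thus ?thesis using c by simp
qed

lemma h_inv: "x \<in> H \<Longrightarrow> h (inv x) = inv (h x)"
proof -
  assume x: "x \<in> H"
  have xi: "inv x \<in> H" by (rule subgroup.m_inv_closed[OF Hsub x])
  have xc: "x \<in> carrier G" using x HC by blast
  have e1: "h (inv x) \<otimes> h x = h (inv x \<otimes> x)" using hmul[OF xi x] by simp
  have "inv x \<otimes> x = \<one>" using xc by simp
  hence "h (inv x) \<otimes> h x = \<one>" using h_one e1 by simp
  hence "inv (h x) = h (inv x)" using hK[OF x] hK[OF xi] KC by (intro inv_equality) auto
  thus ?thesis by simp
qed

lemma hH: "S \<subseteq> H \<Longrightarrow> h ` S \<subseteq> H" using hK KH by blast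

lemma hn_H: "S \<subseteq> H \<Longrightarrow> (h ^^ n) ` S \<subseteq> H"
proof (induction n)
  case 0 thus ?case by simp
next
  case (Suc n)
  have "(h ^^ Suc n) ` S = h ` ((h ^^ n) ` S)" by (simp add: image_comp)
  thus ?case using hH Suc by simp
qed

lemma T_h: "S \<subseteq> H \<Longrightarrow> S \<in> tau_pow G F (b::'o::wellorder) \<Longrightarrow> h ` S \<in> tau_pow G F b"
proof (induction b arbitrary: S rule: less_induct)
  case (less b)
  show ?case
  proof (cases "\<exists>c. c < b")
    case False
    thus ?thesis using less.prems hinv unfolding h_invariant_def by (subst (asm) tau_pow_unfold, subst tau_pow_unfold) simp
  next
    case True
    have S: "S \<in> tau G (tau_below G F b)" using less.prems True by (subst (asm) tau_pow_unfold) simp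
    have "h ` S \<in> tau G (tau_below G F b)"
    proof (rule tau_via_H[OF Hsub])
      show "h ` S \<subseteq> H" using hH less.prems by blast
      show "\<forall>Z\<in>tau_below G F b. \<forall>x\<in>carrier G. x <# Z \<in> tau_below G F b" by (rule TB_linv)
      show "\<forall>Z\<in>tau_below G F b. \<forall>B\<subseteq>Z. B \<in> tau_below G F b" by (rule TB_down)
      show "{} \<in> tau_below G F b" using True TB_empty by blast
      show "\<forall>g\<in>H. g \<noteq> \<one> \<longrightarrow> h ` S \<inter> (g <# h ` S) \<in> tau_below G F b"
      proof (intro ballI impI)
        fix g assume g: "g \<in> H" "g \<noteq> \<one>"
        show "h ` S \<inter> (g <# h ` S) \<in> tau_below G F b"
        proof (cases "g \<in> h ` H")
          case True
          then obtain g0 where g0: "g0 \<in> H" "g = h g0" by blast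
          have g01: "g0 \<noteq> \<one>" using g g0 h_one by blast
          have g0c: "g0 \<in> carrier G" using g0 HC by blast
          have sub: "h ` S \<inter> (g <# h ` S) \<subseteq> h ` (S \<inter> (g0 <# S))"
          proof
            fix z assume z: "z \<in> h ` S \<inter> (g <# h ` S)"
            then obtain s where s: "s \<in> S" "z = h s" by blast
            obtain z' where z': "z' \<in> h ` S" "z = g \<otimes> z'" using z lcos_mem by blast
            then obtain s' where s': "s' \<in> S" "z' = h s'" by blast
            have sH: "s \<in> H" "s' \<in> H" using s s' less.prems by auto
            have "h s = h (g0 \<otimes> s')" using hmul[OF g0(1) sH(2)] s z' s' g0 by simp
            moreover have "g0 \<otimes> s' \<in> H" by (rule subgroup.m_closed[OF Hsub g0(1) sH(2)])
            ultimately have "s = g0 \<otimes> s'" using inj_onD[OF hinj] sH(1) by blast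
            hence "s \<in> S \<inter> (g0 <# S)" using s s' lcos_mem by blast
            thus "z \<in> h ` (S \<inter> (g0 <# S))" using s by blast
          qed
          have "(\<one> <# S) \<inter> (g0 <# S) \<in> tau_below G F b"
            using tauD[OF S, of \<one> g0] g0c g01 by auto
          moreover have "\<one> <# S = S" using lcos_one less.prems HC by blast
          ultimately have "S \<inter> (g0 <# S) \<in> tau_below G F b" by simp
          then obtain c where c: "c < b" "S \<inter> (g0 <# S) \<in> tau_pow G F c" unfolding TB_iff by blast
          have "h ` (S \<inter> (g0 <# S)) \<in> tau_pow G F c" using less.IH[OF c(1) _ c(2)] less.prems by blast
          hence "h ` S \<inter> (g <# h ` S) \<in> tau_pow G F c" using T_down sub by blast
          thus ?thesis using c unfolding TB_iff by blast
        next
          case False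
          have "h ` S \<inter> (g <# h ` S) = {}"
          proof (rule ccontr)
            assume "h ` S \<inter> (g <# h ` S) \<noteq> {}"
            then obtain z where z: "z \<in> h ` S" "z \<in> g <# h ` S" by blast
            then obtain z' where z': "z' \<in> h ` S" "z = g \<otimes> z'" using lcos_mem by blast
            obtain s s' where s: "s \<in> S" "z = h s" "s' \<in> S" "z' = h s'" using z z' by blast
            have sH: "s \<in> H" "s' \<in> H" using s less.prems by auto
            have zc: "z \<in> carrier G" "z' \<in> carrier G" using hK sH KC s by auto
            have gc: "g \<in> carrier G" using g HC by blast
            have "g = z \<otimes> inv z'" using z' zc gc inv_solve_right[of g z z'] by blast
            also have "\<dots> = h (s \<otimes> inv s')"
              using s hmul[OF sH(1) subgroup.m_inv_closed[OF Hsub sH(2)]] h_inv[OF sH(2)] by simp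
            finally have "g \<in> h ` H" using subgroup.m_closed[OF Hsub sH(1) subgroup.m_inv_closed[OF Hsub sH(2)]] by blast
            thus False using False by blast
          qed
          thus ?thesis using True TB_empty by auto
        qed
      qed
    qed
    thus ?thesis using True by (subst tau_pow_unfold) simp
  qed
qed

lemma T_hn: "S \<subseteq> H \<Longrightarrow> S \<in> tau_pow G F (b::'o::wellorder) \<Longrightarrow> (h ^^ n) ` S \<in> tau_pow G F b"
proof (induction n)
  case 0 thus ?case by simp
next
  case (Suc n)
  have "(h ^^ Suc n) ` S = h ` ((h ^^ n) ` S)" by (simp add: image_comp)
  moreover have "h ` ((h ^^ n) ` S) \<in> tau_pow G F b" using T_h[OF hn_H[OF Suc.prems(1)] Suc.IH[OF Suc.prems]] .
  ultimately show ?case by simp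
qed

lemma hn_sub: "a \<in> (h ^^ N) ` H \<Longrightarrow> b \<in> (h ^^ N) ` H \<Longrightarrow> a \<otimes> inv b \<in> (h ^^ N) ` H"
proof (induction N arbitrary: a b)
  case 0 thus ?case using Hsub subgroup.m_closed subgroup.m_inv_closed by fastforce
next
  case (Suc N)
  have e: "(h ^^ Suc N) ` H = h ` ((h ^^ N) ` H)" by (simp add: image_comp)
  obtain a0 b0 where ab: "a0 \<in> (h ^^ N) ` H" "b0 \<in> (h ^^ N) ` H" "a = h a0" "b = h b0" using Suc.prems e by auto
  have H0: "a0 \<in> H" "b0 \<in> H" using ab hn_H[of H N] by auto
  have "a \<otimes> inv b = h (a0 \<otimes> inv b0)"
    using ab hmul[OF H0(1) subgroup.m_inv_closed[OF Hsub H0(2)]] h_inv[OF H0(2)] by simp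
  moreover have "a0 \<otimes> inv b0 \<in> (h ^^ N) ` H" using Suc.IH ab by blast
  ultimately show ?case using e by blast
qed

lemma hn_mono: "N \<le> n \<Longrightarrow> (h ^^ n) ` H \<subseteq> (h ^^ N) ` H"
proof -
  assume "N \<le> n"
  then obtain k where k: "n = N + k" using le_Suc_ex by blast
  have "(h ^^ n) ` H = (h ^^ N) ` ((h ^^ k) ` H)" unfolding k funpow_add by (simp add: image_comp)
  thus ?thesis using hn_H[of H k] by blast
qed

lemma main:
  assumes An: "\<And>n. A n \<in> tau_below G F \<alpha>" and AH: "\<And>n. A n \<subseteq> H"
  shows "(\<Union>n. (h ^^ n) ` A n) \<in> tau_pow G F \<alpha>"
proof -
  define S where "S = (\<Union>n. (h ^^ n) ` A n)"
  have predA: "\<exists>c. c < \<alpha>" using lim unfolding nonzero_limit_def by blast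
  have SH: "S \<subseteq> H" unfolding S_def using hn_H AH by blast
  have "S \<in> tau G (tau_below G F \<alpha>)"
  proof (rule tau_via_H[OF Hsub SH])
    show "\<forall>Z\<in>tau_below G F \<alpha>. \<forall>x\<in>carrier G. x <# Z \<in> tau_below G F \<alpha>" by (rule TB_linv)
    show "\<forall>Z\<in>tau_below G F \<alpha>. \<forall>B\<subseteq>Z. B \<in> tau_below G F \<alpha>" by (rule TB_down)
    show "{} \<in> tau_below G F \<alpha>" using predA TB_empty by blast
    show "\<forall>g\<in>H. g \<noteq> \<one> \<longrightarrow> S \<inter> (g <# S) \<in> tau_below G F \<alpha>"
    proof (intro ballI impI)
      fix g assume g: "g \<in> H" "g \<noteq> \<one>"
      have gc: "g \<in> carrier G" using g HC by blast
      have "\<exists>N. g \<notin> (h ^^ N) ` H"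
      proof (rule ccontr)
        assume "\<not> (\<exists>N. g \<notin> (h ^^ N) ` H)"
        hence "g \<in> (\<Inter>n. (h ^^ n) ` H)" by blast
        thus False using expd g by blast
      qed
      then obtain N where N: "g \<notin> (h ^^ N) ` H" by blast
      define P where "P n = (h ^^ n) ` A n" for n
      define \<C> where "\<C> = P ` {..<N} \<union> (\<lambda>n. g <# P n) ` {..<N}"
      have PH: "P n \<subseteq> H" for n unfolding P_def using hn_H AH by blast
      have PC: "P n \<subseteq> carrier G" for n using PH HC by blast
      have sub: "S \<inter> (g <# S) \<subseteq> \<Union>\<C>"
      proof
        fix z assume z: "z \<in> S \<inter> (g <# S)"
        then obtain n where n: "z \<in> P n" unfolding S_def P_def by blast
        obtain z' where z': "z' \<in> S" "z = g \<otimes> z'" using z lcos_mem by blast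
        then obtain p where p: "z' \<in> P p" unfolding S_def P_def by blast
        show "z \<in> \<Union>\<C>"
        proof (cases "n < N")
          case True thus ?thesis using n unfolding \<C>_def by blast
        next
          case nN: False
          show ?thesis
          proof (cases "p < N")
            case True
            have "z \<in> g <# P p" using z' p lcos_mem by blast
            thus ?thesis using True unfolding \<C>_def by blast
          next
            case False
            have "z \<in> (h ^^ N) ` H" using n nN hn_mono[of N n] AH unfolding P_def by force
            moreover have "z' \<in> (h ^^ N) ` H" using p False hn_mono[of N p] AH unfolding P_def by force
            ultimately have "z \<otimes> inv z' \<in> (h ^^ N) ` H" by (rule hn_sub)
            moreover have "g = z \<otimes> inv z'"
            proof -
              have zc: "z \<in> carrier G" "z' \<in> carrier G" using n p PC by auto
              show ?thesis using z'(2) zc gc inv_solve_right[of g z z'] by blast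
            qed
            ultimately show ?thesis using N by simp
          qed
        qed
      qed
      have Pin: "P n \<in> tau_below G F \<alpha>" for n
      proof -
        obtain c where "c < \<alpha>" "A n \<in> tau_pow G F c" using An unfolding TB_iff by blast
        thus ?thesis unfolding P_def TB_iff using T_hn AH by blast
      qed
      have Cin: "\<C> \<subseteq> tau_below G F \<alpha>"
      proof
        fix X assume "X \<in> \<C>"
        then obtain n where "X = P n \<or> X = g <# P n" unfolding \<C>_def by blast
        thus "X \<in> tau_below G F \<alpha>" using Pin TB_linv gc by blast
      qed
      have CH: "\<forall>C\<in>\<C>. C \<subseteq> H" unfolding \<C>_def using PH lcos_H[OF Hsub g(1)] by blast
      have finC: "finite \<C>" unfolding \<C>_def by simp
      obtain c0 where c0: "c0 < \<alpha>" using predA by blast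
      obtain c where c: "c < \<alpha>" "\<C> \<subseteq> tau_pow G F c" using fin_max[OF finC Cin c0] by blast
      obtain r where r: "NL c r" "\<forall>\<D>. finite \<D> \<and> card \<D> \<le> card \<C> \<and> \<D> \<subseteq> tau_pow G F c \<and> (\<forall>C\<in>\<D>. C \<subseteq> H)
            \<longrightarrow> \<Union>\<D> \<in> tau_pow G F r" using ULem[OF c(1), of "card \<C>"] by blast
      have "\<Union>\<C> \<in> tau_pow G F r" using r(2) finC c CH by blast
      hence "S \<inter> (g <# S) \<in> tau_pow G F r" using T_down sub by blast
      moreover have "r < \<alpha>" using NL_lt[OF r(1) lim c(1)] .
      ultimately show "S \<inter> (g <# S) \<in> tau_below G F \<alpha>" unfolding TB_iff by blast
    qed
  qed
  thus ?thesis unfolding S_def using predA by (subst tau_pow_unfold) simp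
qed

end

theorem lemma6p5:
  fixes G :: "('a, 'b) monoid_scheme" and H K :: "'a set" and h :: "'a \<Rightarrow> 'a"
    and \<F> :: "'a set set" and \<alpha> :: "'o::wellorder" and A :: "nat \<Rightarrow> 'a set"
  assumes "group G"
    and "torsion_free_subgroup G H" and "torsion_free_subgroup G K" and "K \<subseteq> H"
    and "h \<in> iso (G\<lparr>carrier := H\<rparr>) (G\<lparr>carrier := K\<rparr>)"
    and "expanding G H h"
    and "is_ideal G \<F>" and "left_invariant G \<F>" and "h_invariant H h \<F>"
    and "nonzero_limit \<alpha>"
    and "\<And>n. A n \<in> tau_below G \<F> \<alpha>" and "\<And>n. A n \<subseteq> H"
  shows "(\<Union>n. (h ^^ n) ` A n) \<in> tau_pow G \<F> \<alpha>"
proof -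
  interpret T0: tp0 G \<F> using assms(1,7,8) by (intro tp0.intro tp0_axioms.intro) auto
  have Hsub: "subgroup H G" and tfH: "\<forall>x\<in>H. \<forall>n::nat. n > 0 \<longrightarrow> x [^]\<^bsub>G\<^esub> n = \<one>\<^bsub>G\<^esub> \<longrightarrow> x = \<one>\<^bsub>G\<^esub>"
    using assms(2) unfolding torsion_free_subgroup_def by auto
  have Ksub: "subgroup K G" using assms(3) unfolding torsion_free_subgroup_def by auto
  have HC: "H \<subseteq> carrier G" using Hsub subgroup.subset by blast
  have hom: "h \<in> hom (G\<lparr>carrier := H\<rparr>) (G\<lparr>carrier := K\<rparr>)" and bij: "bij_betw h H K"
    using assms(5) unfolding iso_def by auto
  have hK: "\<And>x. x \<in> H \<Longrightarrow> h x \<in> K" using bij bij_betwE by blast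
  have hinj: "inj_on h H" using bij bij_betw_def by blast
  have hmul: "\<And>x y. x \<in> H \<Longrightarrow> y \<in> H \<Longrightarrow> h (x \<otimes>\<^bsub>G\<^esub> y) = h x \<otimes>\<^bsub>G\<^esub> h y"
    using hom unfolding hom_def by auto
  have predA: "\<exists>c. c < \<alpha>" using assms(10) unfolding nonzero_limit_def by blast
  have SH: "(\<Union>n. (h ^^ n) ` A n) \<subseteq> H"
  proof -
    have "(h ^^ n) ` S \<subseteq> H" if "S \<subseteq> H" for n S
    proof (induction n)
      case 0 thus ?case using that by simp
    next
      case (Suc n)
      have "(h ^^ Suc n) ` S = h ` ((h ^^ n) ` S)" by (simp add: image_comp)
      moreover have "h ` ((h ^^ n) ` S) \<subseteq> H"
      proof
        fix z assume "z \<in> h ` ((h ^^ n) ` S)"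
        then obtain y where y: "y \<in> (h ^^ n) ` S" "z = h y" by blast
        have "y \<in> H" using y(1) Suc.IH by blast
        thus "z \<in> H" using y(2) hK assms(4) by blast
      qed
      ultimately show ?case by simp
    qed
    thus ?thesis using assms(12) by blast
  qed
  show ?thesis
  proof (cases "\<exists>x\<in>carrier G. x \<noteq> \<one>\<^bsub>G\<^esub>")
    case False
    have "(\<Union>n. (h ^^ n) ` A n) \<in> tau G (tau_below G \<F> \<alpha>)"
    proof (rule group.tauI[OF assms(1)])
      show "(\<Union>n. (h ^^ n) ` A n) \<subseteq> carrier G" using SH HC by blast
      fix x y assume "x \<in> carrier G" "y \<in> carrier G" "x \<noteq> y"
      hence False using False by metis
      thus "(x <#\<^bsub>G\<^esub> (\<Union>n. (h ^^ n) ` A n)) \<inter> (y <#\<^bsub>G\<^esub> (\<Union>n. (h ^^ n) ` A n)) \<in> tau_below G \<F> \<alpha>" by blast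
    qed
    thus ?thesis using predA by (subst tau_pow_unfold) simp
  next
    case True
    then obtain x where x: "x \<in> carrier G" "x \<noteq> \<one>\<^bsub>G\<^esub>" by blast
    obtain c where c: "c < \<alpha>" "A 0 \<in> tau_pow G \<F> c" using assms(11)[of 0] unfolding T0.TB_iff by blast
    have "{} \<in> tau_pow G \<F> c" using T0.T_down[OF c(2)] by blast
    hence empF: "{} \<in> \<F>" using T0.empty_F[OF x] by blast
    interpret M: tpM G \<F> H \<alpha> K h
    proof (intro tpM.intro tpU.intro tp.intro tp_axioms.intro tpU_axioms.intro tpM_axioms.intro)
      show "tp0 G \<F>" by unfold_locales
      show "{} \<in> \<F>" by (rule empF)
      show "subgroup H G" by (rule Hsub)
      show "\<forall>x\<in>H. \<forall>n::nat. n > 0 \<longrightarrow> x [^]\<^bsub>G\<^esub> n = \<one>\<^bsub>G\<^esub> \<longrightarrow> x = \<one>\<^bsub>G\<^esub>" by (rule tfH)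
      show "nonzero_limit \<alpha>" by (rule assms(10))
      show "subgroup K G" by (rule Ksub)
      show "K \<subseteq> H" by (rule assms(4))
      show "\<And>x. x \<in> H \<Longrightarrow> h x \<in> K" by (rule hK)
      show "\<And>x y. x \<in> H \<Longrightarrow> y \<in> H \<Longrightarrow> h (x \<otimes>\<^bsub>G\<^esub> y) = h x \<otimes>\<^bsub>G\<^esub> h y" by (rule hmul)
      show "inj_on h H" by (rule hinj)
      show "h_invariant H h \<F>" by (rule assms(9))
      show "(\<Inter>n. (h ^^ n) ` H) = {\<one>\<^bsub>G\<^esub>}" using assms(6) unfolding expanding_def .
    qed
    show ?thesis using M.main assms(11,12) by blast
  qed
qed

end
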